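(* Let $\mathbf{L}=(L,\le)$ be a finite join-semilattice with greatest element $1_{\mathbf{L}}$, let $n\in\mathbb{N}$, and let $\mathbf{K}=(K,\le)$ with $K=\{1,\dots,n\}\cup\{\infty\}$ (disjoint union) and $\le=\mathrm{id}_K\cup(K\times\{\infty\})$, so $1_{\mathbf{K}}=\infty$. Let $S$ be a subgroup of $(\mathrm{Aut}(\mathbf{K}),\circ)$ such that $f\vee g=k_{1_{\mathbf{K}}}$ for all $f,g\in S$ with $f\ne g$, and let $\bar S=S\cup\{k_{1_{\mathbf{K}}}\}$. Let $(R,\vee,\circ)$ be a subsemiring of $(\mathrm{JM}_1(\mathbf{L}\boxtimes\mathbf{K}),\vee,\circ)$ such that (a) every $\varphi\in R$ equals $f\boxtimes g$ for some $f\in\mathrm{JM}_1(\mathbf{L})$ and $g\in\bar S$; (b) $f_{a,b}\boxtimes g\in R$ for all $a\in L\setminus\{1_{\mathbf{L}}\}$, $b\in L$, $g\in\bar S$; (c) for every $\varphi\in R$ there exist $a\in L\setminus\{1_{\mathbf{L}}\}$, $b\in L$, $g\in\bar S$ with $f_{a,b}\boxtimes g\le\varphi$. Then $(R,\vee,\circ)$ is a finite simple additively idempotent semiring with absorbing greatest element.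
   Context: For a finite join-semilattice $\mathbf{M}$ with greatest element $1$, $\mathrm{JM}_1(\mathbf{M})$ is the set of join-preserving maps $f:M\to M$ with $f(1)=1$, a semiring under pointwise join $\vee$ and composition $\circ$, ordered pointwise; $k_a$ is the constant map with value $a$; $f_{a,b}(x)=b$ if $x\le a$ and $1$ otherwise. $\mathrm{Aut}(\mathbf{K})$ is the group of order automorphisms of $\mathbf{K}$ (bijections of $K$ fixing $\infty$). For finite join-semilattices $\mathbf{L},\mathbf{K}$, let $A=\{(x,y)\in L\times K: x=1_{\mathbf{L}}\text{ or }y=1_{\mathbf{K}}\}$, and let $L\boxtimes K$ be the quotient of $L\times K$ identifying all elements of $A$ to a single class (denoted $A$) and leaving other elements as singletons; order: every class is $\le A$, and $[a,b]\le[c,d]$ iff $a\le c$ and $b\le d$ for classes other than $A$. $\mathbf{L}\boxtimes\mathbf{K}=(L\boxtimes K,\le)$, a join-semilattice with top $A$. For $f\in\mathrm{JM}_1(\mathbf{L})$, $g\in\mathrm{JM}_1(\mathbf{K})$, $f\boxtimes g\in\mathrm{JM}_1(\mathbf{L}\boxtimes\mathbf{K})$ is given by $(f\boxtimes g)([x,y])=[f(x),g(y)]$, where $[x,y]$ is the class of $(x,y)$. A semiring is simple if its only congruences are the identity and the full relation; additively idempotent if $r+r=r$; an element is absorbing if $sr=r=rs$ for all $s$. *)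

theory Defs
  imports Main "HOL-Library.FuncSet"
begin

definition is_join :: "('a \<Rightarrow> 'a \<Rightarrow> bool) \<Rightarrow> 'a set \<Rightarrow> 'a \<Rightarrow> 'a \<Rightarrow> 'a \<Rightarrow> bool" where
  "is_join lo M x y z \<longleftrightarrow> z \<in> M \<and> lo x z \<and> lo y z \<and> (\<forall>w\<in>M. lo x w \<and> lo y w \<longrightarrow> lo z w)"

definition sjoin :: "('a \<Rightarrow> 'a \<Rightarrow> bool) \<Rightarrow> 'a set \<Rightarrow> 'a \<Rightarrow> 'a \<Rightarrow> 'a" where
  "sjoin lo M x y = (THE z. is_join lo M x y z)"

definition JM1 :: "'a set \<Rightarrow> ('a \<Rightarrow> 'a \<Rightarrow> bool) \<Rightarrow> 'a \<Rightarrow> ('a \<Rightarrow> 'a) set" where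
  "JM1 M lo t = {f. f \<in> extensional M \<and> f \<in> M \<rightarrow> M \<and>
      (\<forall>x\<in>M. \<forall>y\<in>M. f (sjoin lo M x y) = sjoin lo M (f x) (f y)) \<and> f t = t}"

definition jm_add :: "'a set \<Rightarrow> ('a \<Rightarrow> 'a \<Rightarrow> bool) \<Rightarrow> ('a \<Rightarrow> 'a) \<Rightarrow> ('a \<Rightarrow> 'a) \<Rightarrow> ('a \<Rightarrow> 'a)" where
  "jm_add M lo f g = (\<lambda>x\<in>M. sjoin lo M (f x) (g x))"

definition jm_mult :: "'a set \<Rightarrow> ('a \<Rightarrow> 'a) \<Rightarrow> ('a \<Rightarrow> 'a) \<Rightarrow> ('a \<Rightarrow> 'a)" where
  "jm_mult M f g = compose M f g"

definition jm_le :: "'a set \<Rightarrow> ('a \<Rightarrow> 'a \<Rightarrow> bool) \<Rightarrow> ('a \<Rightarrow> 'a) \<Rightarrow> ('a \<Rightarrow> 'a) \<Rightarrow> bool" where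
  "jm_le M lo f g \<longleftrightarrow> (\<forall>x\<in>M. lo (f x) (g x))"

definition kconst :: "'a set \<Rightarrow> 'a \<Rightarrow> ('a \<Rightarrow> 'a)" where
  "kconst M a = (\<lambda>x\<in>M. a)"

definition fab :: "'a::order_top \<Rightarrow> 'a \<Rightarrow> ('a \<Rightarrow> 'a)" where
  "fab a b = (\<lambda>x. if x \<le> a then b else top)"

section \<open>The semilattice K = {1,...,n} + {\<infinity>}; \<infinity> is represented by None\<close>

definition Kset :: "nat \<Rightarrow> nat option set" where
  "Kset n = Some ` {1..n} \<union> {None}"

definition leK :: "nat option \<Rightarrow> nat option \<Rightarrow> bool" where
  "leK x y \<longleftrightarrow> x = y \<or> y = None"

text \<open>Order automorphisms of K: bijections of K fixing \<infinity> (extensional on K).\<close>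
definition AutK :: "nat \<Rightarrow> (nat option \<Rightarrow> nat option) set" where
  "AutK n = {g. g \<in> extensional (Kset n) \<and> bij_betw g (Kset n) (Kset n) \<and> g None = None}"

definition subgroup_AutK :: "nat \<Rightarrow> (nat option \<Rightarrow> nat option) set \<Rightarrow> bool" where
  "subgroup_AutK n S \<longleftrightarrow> S \<subseteq> AutK n \<and> (\<lambda>x\<in>Kset n. x) \<in> S \<and>
     (\<forall>f\<in>S. \<forall>g\<in>S. compose (Kset n) f g \<in> S) \<and>
     (\<forall>f\<in>S. restrict (inv_into (Kset n) f) (Kset n) \<in> S)"

section \<open>The construction L \<boxtimes> K (as an actual quotient set)\<close>

definition Pset :: "nat \<Rightarrow> ('a \<times> nat option) set" where
  "Pset n = UNIV \<times> Kset n"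

definition Aset :: "nat \<Rightarrow> ('a::top \<times> nat option) set" where
  "Aset n = {(x, y) \<in> Pset n. x = top \<or> y = None}"

definition boxrel :: "nat \<Rightarrow> (('a::top \<times> nat option) \<times> ('a \<times> nat option)) set" where
  "boxrel n = {(p, q). p \<in> Pset n \<and> q \<in> Pset n \<and> (p = q \<or> (p \<in> Aset n \<and> q \<in> Aset n))}"

definition LK :: "nat \<Rightarrow> ('a::top \<times> nat option) set set" where
  "LK n = Pset n // boxrel n"

definition cls :: "nat \<Rightarrow> 'a::top \<Rightarrow> nat option \<Rightarrow> ('a \<times> nat option) set" where
  "cls n x y = boxrel n `` {(x, y)}"

definition leLK :: "nat \<Rightarrow> ('a::order_top \<times> nat option) set \<Rightarrow> ('a \<times> nat option) set \<Rightarrow> bool" where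
  "leLK n c d \<longleftrightarrow> c \<in> LK n \<and> d \<in> LK n \<and>
     (d = Aset n \<or> (c \<noteq> Aset n \<and> d \<noteq> Aset n \<and>
        fst (the_elem c) \<le> fst (the_elem d) \<and> leK (snd (the_elem c)) (snd (the_elem d))))"

text \<open>f \<boxtimes> g, given by [x,y] \<mapsto> [f x, g y].\<close>
definition boxmap :: "nat \<Rightarrow> ('a::top \<Rightarrow> 'a) \<Rightarrow> (nat option \<Rightarrow> nat option)
    \<Rightarrow> (('a \<times> nat option) set \<Rightarrow> ('a \<times> nat option) set)" where
  "boxmap n f g = (\<lambda>c\<in>LK n. cls n (f (fst (SOME p. p \<in> c))) (g (snd (SOME p. p \<in> c))))"

definition subsemiring :: "'b set \<Rightarrow> 'b set \<Rightarrow> ('b \<Rightarrow> 'b \<Rightarrow> 'b) \<Rightarrow> ('b \<Rightarrow> 'b \<Rightarrow> 'b) \<Rightarrow> bool" where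
  "subsemiring R T add mult \<longleftrightarrow> R \<subseteq> T \<and> R \<noteq> {} \<and>
     (\<forall>r\<in>R. \<forall>s\<in>R. add r s \<in> R \<and> mult r s \<in> R)"

definition is_semiring :: "'b set \<Rightarrow> ('b \<Rightarrow> 'b \<Rightarrow> 'b) \<Rightarrow> ('b \<Rightarrow> 'b \<Rightarrow> 'b) \<Rightarrow> bool" where
  "is_semiring R add mult \<longleftrightarrow> R \<noteq> {} \<and>
     (\<forall>r\<in>R. \<forall>s\<in>R. add r s \<in> R \<and> mult r s \<in> R) \<and>
     (\<forall>r\<in>R. \<forall>s\<in>R. \<forall>t\<in>R.
        add (add r s) t = add r (add s t) \<and> add r s = add s r \<and>
        mult (mult r s) t = mult r (mult s t) \<and>
        mult r (add s t) = add (mult r s) (mult r t) \<and>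
        mult (add r s) t = add (mult r t) (mult s t))"

definition semiring_congruence :: "'b set \<Rightarrow> ('b \<Rightarrow> 'b \<Rightarrow> 'b) \<Rightarrow> ('b \<Rightarrow> 'b \<Rightarrow> 'b) \<Rightarrow> 'b rel \<Rightarrow> bool" where
  "semiring_congruence R add mult \<rho> \<longleftrightarrow> equiv R \<rho> \<and>
     (\<forall>(a, b)\<in>\<rho>. \<forall>c\<in>R. (add a c, add b c) \<in> \<rho> \<and> (add c a, add c b) \<in> \<rho> \<and>
                        (mult a c, mult b c) \<in> \<rho> \<and> (mult c a, mult c b) \<in> \<rho>)"

definition simple_semiring :: "'b set \<Rightarrow> ('b \<Rightarrow> 'b \<Rightarrow> 'b) \<Rightarrow> ('b \<Rightarrow> 'b \<Rightarrow> 'b) \<Rightarrow> bool" where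
  "simple_semiring R add mult \<longleftrightarrow>
     (\<forall>\<rho>. semiring_congruence R add mult \<rho> \<longrightarrow> \<rho> = Id_on R \<or> \<rho> = R \<times> R)"

definition add_idempotent :: "'b set \<Rightarrow> ('b \<Rightarrow> 'b \<Rightarrow> 'b) \<Rightarrow> bool" where
  "add_idempotent R add \<longleftrightarrow> (\<forall>r\<in>R. add r r = r)"

text \<open>Absorbing greatest element (greatest w.r.t. the semiring order r \<le> s iff r + s = s).\<close>
definition has_absorbing_greatest :: "'b set \<Rightarrow> ('b \<Rightarrow> 'b \<Rightarrow> 'b) \<Rightarrow> ('b \<Rightarrow> 'b \<Rightarrow> 'b) \<Rightarrow> bool" where
  "has_absorbing_greatest R add mult \<longleftrightarrow>
     (\<exists>w\<in>R. (\<forall>r\<in>R. add r w = w) \<and> (\<forall>s\<in>R. mult s w = w \<and> mult w s = w))"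

end

theory Submission
  imports Defs
begin


lemma Kset_None[simp]: "None \<in> Kset n" by (simp add: Kset_def)
lemma Kset_Some[simp]: "Some i \<in> Kset n \<longleftrightarrow> i \<in> {1..n}" by (auto simp: Kset_def)
lemma Pset_mem[simp]: "(x,y) \<in> Pset n \<longleftrightarrow> y \<in> Kset n" by (simp add: Pset_def)
lemma Aset_mem: "(x,y) \<in> Aset n \<longleftrightarrow> y \<in> Kset n \<and> (x = top \<or> y = None)"
  by (simp add: Aset_def)

lemma cls_eq: "y \<in> Kset n \<Longrightarrow> cls n x y = (if x = top \<or> y = None then Aset n else {(x,y)})"
  unfolding cls_def boxrel_def by (auto simp: Aset_def Pset_def)

lemma A_LK: "(Aset n :: ('a::top \<times> nat option) set) \<in> LK n"
proof -
  have "(Aset n :: ('a \<times> nat option) set) = cls n top None" by (simp add: cls_eq)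
  moreover have "(cls n top None :: ('a \<times> nat option) set) \<in> LK n" unfolding LK_def cls_def
    by (rule quotientI) simp
  ultimately show ?thesis by simp
qed

lemma cls_LK: "y \<in> Kset n \<Longrightarrow> cls n x y \<in> LK n"
  unfolding LK_def cls_def by (auto intro!: quotientI)

lemma single_LK: "x \<noteq> top \<Longrightarrow> i \<in> {1..n} \<Longrightarrow> {(x, Some i)} \<in> LK n"
  using cls_LK[of "Some i" n x] by (simp add: cls_eq)

lemma single_ne_A: "{(x, Some i)} \<noteq> Aset n"
proof
  assume "{(x, Some i)} = Aset n"
  moreover have "(top, None) \<in> Aset n" by (simp add: Aset_mem)
  ultimately show False by auto
qed

lemma LK_cases: "c \<in> LK n \<Longrightarrow> c = Aset n \<or> (\<exists>x i. x \<noteq> top \<and> i \<in> {1..n} \<and> c = {(x, Some i)})"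
proof -
  assume "c \<in> LK n"
  then obtain p where p: "p \<in> Pset n" "c = cls n (fst p) (snd p)"
    unfolding LK_def cls_def quotient_def by auto
  obtain x y where xy: "p = (x,y)" by fastforce
  with p have y: "y \<in> Kset n" by simp
  show ?thesis
  proof (cases "x = top \<or> y = None")
    case True then show ?thesis using p xy y by (simp add: cls_eq)
  next
    case False
    then obtain i where "y = Some i" by auto
    with False y p xy show ?thesis by (auto simp: cls_eq)
  qed
qed

lemma LK_finite: "finite (LK (n::nat) :: ('a::{finite,top} \<times> nat option) set set)"
proof -
  have "finite (Kset n)" by (simp add: Kset_def)
  hence "finite (Pset n :: ('a \<times> nat option) set)" by (simp add: Pset_def)
  moreover have "LK n \<subseteq> Pow (Pset n :: ('a \<times> nat option) set)"
    unfolding LK_def quotient_def boxrel_def by auto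
  ultimately show ?thesis by (meson finite_Pow_iff rev_finite_subset)
qed

lemma leLK_A: "c \<in> LK n \<Longrightarrow> leLK n c (Aset n)"
  by (simp add: leLK_def A_LK)

lemma leLK_AN: "\<not> leLK n (Aset n) {(x, Some i)}"
proof -
  have "{(x, Some i)} \<noteq> Aset n" by (rule single_ne_A)
  thus ?thesis by (simp add: leLK_def)
qed

lemma leLK_NN: "x \<noteq> top \<Longrightarrow> x' \<noteq> top \<Longrightarrow> i \<in> {1..n} \<Longrightarrow> i' \<in> {1..n} \<Longrightarrow>
   leLK n {(x, Some i)} {(x', Some i')} \<longleftrightarrow> x \<le> x' \<and> i = i'"
proof -
  assume h: "x \<noteq> top" "x' \<noteq> top" "i \<in> {1..n}" "i' \<in> {1..n}"
  have "{(x, Some i)} \<noteq> Aset n" "{(x', Some i')} \<noteq> Aset n" by (rule single_ne_A)+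
  moreover have "{(x, Some i)} \<in> LK n" "{(x', Some i')} \<in> LK n" using h by (simp_all add: single_LK)
  ultimately show ?thesis by (simp add: leLK_def leK_def)
qed

locale jsl =
  fixes M :: "'b set" and lo :: "'b \<Rightarrow> 'b \<Rightarrow> bool"
  assumes rfl: "x \<in> M \<Longrightarrow> lo x x"
    and asym: "x \<in> M \<Longrightarrow> y \<in> M \<Longrightarrow> lo x y \<Longrightarrow> lo y x \<Longrightarrow> x = y"
    and trns: "x \<in> M \<Longrightarrow> y \<in> M \<Longrightarrow> z \<in> M \<Longrightarrow> lo x y \<Longrightarrow> lo y z \<Longrightarrow> lo x z"
    and jex: "x \<in> M \<Longrightarrow> y \<in> M \<Longrightarrow> \<exists>z. is_join lo M x y z"
begin

lemma sj_eqI: "is_join lo M x y z \<Longrightarrow> sjoin lo M x y = z"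
  unfolding sjoin_def
  by (rule the_equality) (auto simp: is_join_def intro: asym)

lemma sj_join: "x \<in> M \<Longrightarrow> y \<in> M \<Longrightarrow> is_join lo M x y (sjoin lo M x y)"
  using jex sj_eqI by metis

lemma sj_in: "x \<in> M \<Longrightarrow> y \<in> M \<Longrightarrow> sjoin lo M x y \<in> M"
  and sj_ub1: "x \<in> M \<Longrightarrow> y \<in> M \<Longrightarrow> lo x (sjoin lo M x y)"
  and sj_ub2: "x \<in> M \<Longrightarrow> y \<in> M \<Longrightarrow> lo y (sjoin lo M x y)"
  and sj_least: "x \<in> M \<Longrightarrow> y \<in> M \<Longrightarrow> w \<in> M \<Longrightarrow> lo x w \<Longrightarrow> lo y w \<Longrightarrow> lo (sjoin lo M x y) w"
  using sj_join unfolding is_join_def by blast+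

lemma sj_comm: "x \<in> M \<Longrightarrow> y \<in> M \<Longrightarrow> sjoin lo M x y = sjoin lo M y x"
  by (rule sj_eqI) (auto simp: is_join_def sj_in sj_ub1 sj_ub2 sj_least)

lemma sj_absorb: "x \<in> M \<Longrightarrow> y \<in> M \<Longrightarrow> lo x y \<Longrightarrow> sjoin lo M x y = y"
  by (rule sj_eqI) (auto simp: is_join_def rfl)

lemma sj_absorb2: "x \<in> M \<Longrightarrow> y \<in> M \<Longrightarrow> lo x y \<Longrightarrow> sjoin lo M y x = y"
  using sj_absorb sj_comm by metis

lemma sj_idem: "x \<in> M \<Longrightarrow> sjoin lo M x x = x"
  by (simp add: sj_absorb rfl)

lemma sj_assoc: "x \<in> M \<Longrightarrow> y \<in> M \<Longrightarrow> z \<in> M \<Longrightarrow>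
   sjoin lo M (sjoin lo M x y) z = sjoin lo M x (sjoin lo M y z)"
proof -
  assume h: "x \<in> M" "y \<in> M" "z \<in> M"
  let ?l = "sjoin lo M (sjoin lo M x y) z" and ?r = "sjoin lo M x (sjoin lo M y z)"
  have inl: "?l \<in> M" and inr: "?r \<in> M" using h by (simp_all add: sj_in)
  have xy: "sjoin lo M x y \<in> M" and yz: "sjoin lo M y z \<in> M" using h by (simp_all add: sj_in)
  have a1: "lo x ?r" using h yz by (simp add: sj_ub1)
  have a2: "lo y ?r" using h yz trns[OF h(2) yz inr] sj_ub1[of y z] sj_ub2[of x "sjoin lo M y z"] by blast
  have a3: "lo z ?r" using h yz trns[OF h(3) yz inr] sj_ub2[of y z] sj_ub2[of x "sjoin lo M y z"] by blast
  have "lo ?l ?r" using sj_least[OF xy h(3) inr] sj_least[OF h(1) h(2) inr] a1 a2 a3 by blast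
  have b1: "lo z ?l" using h xy by (simp add: sj_ub2)
  have b2: "lo y ?l" using h xy trns[OF h(2) xy inl] sj_ub2[of x y] sj_ub1[of "sjoin lo M x y" z] by blast
  have b3: "lo x ?l" using h xy trns[OF h(1) xy inl] sj_ub1[of x y] sj_ub1[of "sjoin lo M x y" z] by blast
  have "lo ?r ?l" using sj_least[OF h(1) yz inl] sj_least[OF h(2) h(3) inl] b1 b2 b3 by blast
  moreover note \<open>lo ?l ?r\<close>
  ultimately show ?thesis using inl inr asym by blast
qed

end

lemma jsl_K: "jsl (Kset n) leK"
proof
  fix x y assume "x \<in> Kset n" "y \<in> Kset n"
  thus "\<exists>z. is_join leK (Kset n) x y z"
    by (intro exI[of _ "if x = y then x else None"]) (auto simp: leK_def is_join_def)
qed (auto simp: leK_def)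


lemma LK_casesE: "c \<in> LK n \<Longrightarrow> (c = Aset n \<Longrightarrow> P) \<Longrightarrow>
   (\<And>x i. x \<noteq> top \<Longrightarrow> i \<in> {1..n} \<Longrightarrow> c = {(x, Some i)} \<Longrightarrow> P) \<Longrightarrow> P"
  using LK_cases by blast

lemma jsl_LK: "jsl (LK n) (leLK n :: ('a::{semilattice_sup,order_top} \<times> nat option) set \<Rightarrow> _)"
proof
  fix c :: "('a \<times> nat option) set" assume "c \<in> LK n"
  thus "leLK n c c" by (rule LK_casesE) (auto simp: leLK_A leLK_NN A_LK)
next
  fix c d :: "('a \<times> nat option) set" assume c: "c \<in> LK n" and d: "d \<in> LK n"
    and cd: "leLK n c d" "leLK n d c"
  from c d cd show "c = d"
    by (elim LK_casesE) (auto simp: leLK_AN leLK_NN)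
next
  fix c d e :: "('a \<times> nat option) set" assume c: "c \<in> LK n" and d: "d \<in> LK n" and e: "e \<in> LK n"
    and cd: "leLK n c d" "leLK n d e"
  show "leLK n c e"
    using e apply (rule LK_casesE)
    using c apply (simp add: leLK_A)
    using c d cd by (auto simp: leLK_AN leLK_NN elim!: LK_casesE)
next
  fix c d :: "('a \<times> nat option) set" assume c: "c \<in> LK n" and d: "d \<in> LK n"
  show "\<exists>z. is_join (leLK n) (LK n) c d z"
  proof (cases "c = Aset n \<or> d = Aset n")
    case True
    then show ?thesis using c d
      by (intro exI[of _ "Aset n"]) (auto simp: is_join_def A_LK leLK_A)
  next
    case False
    then obtain x i x' i' where xi: "x \<noteq> top" "i \<in> {1..n}" "c = {(x, Some i)}"
      and xi': "x' \<noteq> top" "i' \<in> {1..n}" "d = {(x', Some i')}"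
      using c d LK_cases by metis
    show ?thesis
    proof (cases "i = i' \<and> sup x x' \<noteq> top")
      case True
      then show ?thesis using xi xi'
        apply (intro exI[of _ "{(sup x x', Some i)}"])
        apply (auto simp: is_join_def single_LK leLK_NN)
        apply (erule LK_casesE; auto simp: leLK_A leLK_NN top_unique single_LK)+
        done
    next
      case False
      then show ?thesis using xi xi'
        apply (intro exI[of _ "Aset n"])
        apply (auto simp: is_join_def A_LK leLK_A single_LK)
        subgoal for w
          apply (rule LK_casesE[of w n])
            apply (simp_all add: A_LK leLK_A)
          by (clarsimp simp: leLK_NN)
        subgoal for w
          apply (rule LK_casesE[of w n])
            apply (simp_all add: A_LK leLK_A)
          apply (clarsimp simp: leLK_NN)
          by (metis sup_least top_unique)
        done
    qed
  qed
qed


interpretation LKj: jsl "LK n" "leLK n :: ('a::{semilattice_sup,order_top} \<times> nat option) set \<Rightarrow> _"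
  by (rule jsl_LK)

interpretation Kj: jsl "Kset n" leK
  by (rule jsl_K)

lemma sjoin_A: "c \<in> LK n \<Longrightarrow> sjoin (leLK n) (LK n) c (Aset n) = (Aset n :: ('a::{semilattice_sup,order_top} \<times> nat option) set)"
  by (simp add: LKj.sj_absorb leLK_A A_LK)

lemma sjoin_A2: "c \<in> LK n \<Longrightarrow> sjoin (leLK n) (LK n) (Aset n) c = (Aset n :: ('a::{semilattice_sup,order_top} \<times> nat option) set)"
  by (simp add: LKj.sj_absorb2 leLK_A A_LK)

lemma sjoin_NN_diff:
  fixes x x' :: "'a::{semilattice_sup,order_top}"
  assumes "x \<noteq> top" "x' \<noteq> top" "i \<in> {1..n}" "i' \<in> {1..n}" "i \<noteq> i'"
  shows "sjoin (leLK n) (LK n) {(x, Some i)} {(x', Some i')} = Aset n"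
proof -
  let ?z = "sjoin (leLK n) (LK n) {(x, Some i)} {(x', Some i')}"
  have m: "{(x, Some i)} \<in> LK n" "{(x', Some i')} \<in> LK n" using assms by (simp_all add: single_LK)
  have z: "?z \<in> LK n" "leLK n {(x, Some i)} ?z" "leLK n {(x', Some i')} ?z"
    using m by (simp_all add: LKj.sj_in LKj.sj_ub1 LKj.sj_ub2)
  show ?thesis
    using z(1) apply (rule LK_casesE)
     apply simp
    using z assms by (auto simp: leLK_NN)
qed

definition Kmap :: "nat \<Rightarrow> (nat option \<Rightarrow> nat option) \<Rightarrow> bool" where
  "Kmap n g \<longleftrightarrow> g \<in> Kset n \<rightarrow> Kset n \<and> g None = None"

definition Wm :: "nat \<Rightarrow> ('a::top \<times> nat option) set \<Rightarrow> ('a \<times> nat option) set" where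
  "Wm n = (\<lambda>c\<in>LK n. Aset n)"

lemma boxmap_ext: "boxmap n f g \<in> extensional (LK n)"
  by (simp add: boxmap_def)

lemma Wm_ext: "Wm n \<in> extensional (LK n)"
  by (simp add: Wm_def)

lemma boxmap_A:
  fixes f :: "'a::top \<Rightarrow> 'a"
  assumes "f top = top" "Kmap n g"
  shows "boxmap n f g (Aset n) = Aset n"
proof -
  have "(top, None) \<in> (Aset n :: ('a \<times> nat option) set)" by (simp add: Aset_mem)
  hence ex: "\<exists>p. p \<in> (Aset n :: ('a \<times> nat option) set)" by blast
  define p where "p = (SOME p. p \<in> (Aset n :: ('a \<times> nat option) set))"
  have "p \<in> Aset n" unfolding p_def using someI_ex[OF ex] .
  then obtain x y where p: "p = ((x::'a),y)" "y \<in> Kset n" "x = top \<or> y = None"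
    by (cases p) (auto simp: Aset_mem)
  have gy: "g y \<in> Kset n" using assms p unfolding Kmap_def by auto
  have "cls n (f x) (g y) = Aset n"
    using p gy assms by (auto simp: cls_eq Kmap_def)
  moreover have "(Aset n :: ('a \<times> nat option) set) \<in> LK n" by (rule A_LK)
  ultimately show ?thesis unfolding boxmap_def using p p_def by simp
qed

lemma boxmap_N:
  assumes "x \<noteq> top" "i \<in> {1..n}"
  shows "boxmap n f g {(x, Some i)} = cls n (f x) (g (Some i))"
  using assms by (simp add: boxmap_def single_LK)

lemma Kmap_Some: "Kmap n g \<Longrightarrow> i \<in> {1..n} \<Longrightarrow> g (Some i) \<in> Kset n"
  unfolding Kmap_def by (metis Kset_Some PiE)

lemma boxmap_LK: "f top = top \<Longrightarrow> Kmap n g \<Longrightarrow> c \<in> LK n \<Longrightarrow> boxmap n f g c \<in> LK n"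
  apply (erule LK_casesE)
   apply (simp add: boxmap_A A_LK)
  apply (simp add: boxmap_N cls_LK Kmap_Some)
  done

lemma boxmap_top: "Kmap n g \<Longrightarrow> boxmap n (\<lambda>_. top) g = Wm n"
  apply (rule extensionalityI[OF boxmap_ext Wm_ext])
  apply (erule LK_casesE)
   apply (simp add: boxmap_A Wm_def A_LK)
  apply (simp add: boxmap_N Wm_def single_LK cls_eq Kmap_Some)
  done

lemma boxmap_kconst: "f top = top \<Longrightarrow> boxmap n f (kconst (Kset n) None) = Wm n"
  apply (rule extensionalityI[OF boxmap_ext Wm_ext])
  apply (erule LK_casesE)
   apply (simp add: boxmap_A Wm_def A_LK Kmap_def kconst_def)
  apply (simp add: boxmap_N Wm_def single_LK cls_eq kconst_def)
  done

lemma Kmap_compose: "Kmap n g1 \<Longrightarrow> Kmap n g2 \<Longrightarrow> Kmap n (compose (Kset n) g1 g2)"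
  unfolding Kmap_def compose_def by auto

lemma boxmap_comp:
  fixes f1 f2 :: "'a::top \<Rightarrow> 'a"
  assumes f1: "f1 top = top" and f2: "f2 top = top" and g1: "Kmap n g1" and g2: "Kmap n g2"
  shows "jm_mult (LK n) (boxmap n f1 g1) (boxmap n f2 g2) = boxmap n (f1 \<circ> f2) (compose (Kset n) g1 g2)"
proof (rule extensionalityI)
  show "jm_mult (LK n) (boxmap n f1 g1) (boxmap n f2 g2) \<in> extensional (LK n)"
    by (simp add: jm_mult_def compose_def)
  show "boxmap n (f1 \<circ> f2) (compose (Kset n) g1 g2) \<in> extensional (LK n)" by (rule boxmap_ext)
  fix c :: "('a \<times> nat option) set" assume c: "c \<in> LK n"
  have g12: "Kmap n (compose (Kset n) g1 g2)" using g1 g2 by (rule Kmap_compose)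
  show "jm_mult (LK n) (boxmap n f1 g1) (boxmap n f2 g2) c = boxmap n (f1 \<circ> f2) (compose (Kset n) g1 g2) c"
    using c
  proof (rule LK_casesE)
    assume "c = Aset n"
    thus ?thesis using c f1 f2 g1 g2 g12 by (simp add: jm_mult_def compose_eq boxmap_A)
  next
    fix x :: 'a and i assume x: "x \<noteq> top" "i \<in> {1..n}" "c = {(x, Some i)}"
    have rhs: "boxmap n (f1 \<circ> f2) (compose (Kset n) g1 g2) c = cls n (f1 (f2 x)) (g1 (g2 (Some i)))"
      using x by (simp add: boxmap_N compose_eq)
    have lhs: "jm_mult (LK n) (boxmap n f1 g1) (boxmap n f2 g2) c = boxmap n f1 g1 (cls n (f2 x) (g2 (Some i)))"
      using x c by (simp add: jm_mult_def compose_eq boxmap_N)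
    have g2i: "g2 (Some i) \<in> Kset n" using g2 x by (simp add: Kmap_Some)
    have g12i: "g1 (g2 (Some i)) \<in> Kset n" using g1 g2i unfolding Kmap_def by auto
    show ?thesis
    proof (cases "f2 x = top \<or> g2 (Some i) = None")
      case True
      then show ?thesis using lhs rhs g2i g12i f1 f2 g1 g2
        by (auto simp: cls_eq boxmap_A Kmap_def)
    next
      case False
      then obtain m where m: "g2 (Some i) = Some m" by auto
      with g2i have "m \<in> {1..n}" by simp
      then show ?thesis using lhs rhs m False by (simp add: cls_eq boxmap_N)
    qed
  qed
qed


lemma compose_id_right: "h \<in> extensional A \<Longrightarrow> compose A h (\<lambda>x\<in>A. x) = h"
  by (rule extensionalityI[of _ A]) (auto simp: compose_def)

locale P84 =
  fixes n :: nat
    and S :: "(nat option \<Rightarrow> nat option) set"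
    and R :: "(('a::{finite, semilattice_sup, order_top} \<times> nat option) set
                \<Rightarrow> ('a \<times> nat option) set) set"
  assumes S_sub: "subgroup_AutK n S"
    and S_join: "\<And>f g. f \<in> S \<Longrightarrow> g \<in> S \<Longrightarrow> f \<noteq> g \<Longrightarrow>
                   jm_add (Kset n) leK f g = kconst (Kset n) None"
    and R_sub: "subsemiring R (JM1 (LK n) (leLK n) (Aset n)) (jm_add (LK n) (leLK n)) (jm_mult (LK n))"
    and a: "\<And>\<phi>. \<phi> \<in> R \<Longrightarrow> \<exists>f \<in> JM1 (UNIV :: 'a set) (\<le>) top.
              \<exists>g \<in> S \<union> {kconst (Kset n) None}. \<phi> = boxmap n f g"
    and b: "\<And>a b g. a \<noteq> top \<Longrightarrow> g \<in> S \<union> {kconst (Kset n) None} \<Longrightarrow> boxmap n (fab a b) g \<in> R"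
    and c: "\<And>\<phi>. \<phi> \<in> R \<Longrightarrow> \<exists>a b g. a \<noteq> top \<and> g \<in> S \<union> {kconst (Kset n) None} \<and>
              jm_le (LK n) (leLK n) (boxmap n (fab a b) g) \<phi>"
begin

abbreviation "K \<equiv> Kset n"
abbreviation "kc \<equiv> kconst (Kset n) None"
abbreviation "add \<equiv> jm_add (LK n) (leLK n :: ('a \<times> nat option) set \<Rightarrow> _)"
abbreviation "mul \<equiv> jm_mult (LK n :: ('a \<times> nat option) set set)"
abbreviation "W \<equiv> (Wm n :: ('a \<times> nat option) set \<Rightarrow> _)"
abbreviation "E a b g \<equiv> boxmap n (fab (a::'a) b) g"

lemma S_Aut: "g \<in> S \<Longrightarrow> g \<in> AutK n"
  using S_sub by (auto simp: subgroup_AutK_def)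

lemma S_Kmap: "g \<in> S \<Longrightarrow> Kmap n g"
  using S_Aut unfolding AutK_def Kmap_def by (auto dest: bij_betw_imp_funcset)

lemma kc_Kmap: "Kmap n kc"
  by (simp add: Kmap_def kconst_def)

lemma Sb_Kmap: "g \<in> S \<union> {kc} \<Longrightarrow> Kmap n g"
  using S_Kmap kc_Kmap by auto

lemma S_ext: "g \<in> S \<Longrightarrow> g \<in> extensional K"
  using S_Aut unfolding AutK_def by auto

lemma S_bij: "g \<in> S \<Longrightarrow> bij_betw g K K"
  using S_Aut unfolding AutK_def by auto

lemma S_id: "(\<lambda>x\<in>K. x) \<in> S"
  using S_sub by (simp add: subgroup_AutK_def)

lemma S_comp: "f \<in> S \<Longrightarrow> g \<in> S \<Longrightarrow> compose K f g \<in> S"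
  using S_sub by (simp add: subgroup_AutK_def)

lemma S_inv: "f \<in> S \<Longrightarrow> restrict (inv_into K f) K \<in> S"
  using S_sub by (simp add: subgroup_AutK_def)

lemma S_Some: assumes "g \<in> S" "i \<in> {1..n}" shows "\<exists>m. m \<in> {1..n} \<and> g (Some i) = Some m"
proof -
  have "g (Some i) \<in> K" using S_Kmap[OF assms(1)] assms(2) by (simp add: Kmap_Some)
  moreover have "g (Some i) \<noteq> None"
  proof
    assume "g (Some i) = None"
    moreover have "g None = None" using S_Kmap[OF assms(1)] by (simp add: Kmap_def)
    moreover have "inj_on g K" using S_bij[OF assms(1)] by (simp add: bij_betw_def)
    ultimately show False using assms(2) by (metis Kset_None Kset_Some inj_on_def option.distinct(1))
  qed
  ultimately show ?thesis by (cases "g (Some i)") auto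
qed

lemma S_distinct: assumes "g \<in> S" "g' \<in> S" "g \<noteq> g'" "i \<in> {1..n}"
  shows "g (Some i) \<noteq> g' (Some i)"
proof
  assume eq: "g (Some i) = g' (Some i)"
  have "jm_add K leK g g' (Some i) = None" using S_join[OF assms(1-3)] assms(4)
    by (simp add: kconst_def)
  hence "sjoin leK K (g (Some i)) (g' (Some i)) = None" using assms(4) by (simp add: jm_add_def)
  moreover obtain m where "g (Some i) = Some m" "m \<in> {1..n}" using S_Some assms by blast
  ultimately show False using eq Kj.sj_idem[of "Some m" n] by simp
qed

lemma fab_top: "a \<noteq> top \<Longrightarrow> fab a b top = top"
  by (simp add: fab_def top_unique)

lemma E_in_R: "a \<noteq> top \<Longrightarrow> g \<in> S \<union> {kc} \<Longrightarrow> E a b g \<in> R"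
  by (rule b)

lemma R_JM: "r \<in> R \<Longrightarrow> r \<in> JM1 (LK n) (leLK n) (Aset n)"
  using R_sub by (auto simp: subsemiring_def)

lemma R_ext: "r \<in> R \<Longrightarrow> r \<in> extensional (LK n)"
  using R_JM by (simp add: JM1_def)

lemma R_fun: "r \<in> R \<Longrightarrow> x \<in> LK n \<Longrightarrow> r x \<in> LK n"
  using R_JM unfolding JM1_def by blast

lemma R_A: "r \<in> R \<Longrightarrow> r (Aset n) = Aset n"
  using R_JM by (simp add: JM1_def)

lemma R_hom: "r \<in> R \<Longrightarrow> x \<in> LK n \<Longrightarrow> y \<in> LK n \<Longrightarrow>
   r (sjoin (leLK n) (LK n) x y) = sjoin (leLK n) (LK n) (r x) (r y)"
  using R_JM by (simp add: JM1_def)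

lemma R_add: "r \<in> R \<Longrightarrow> s \<in> R \<Longrightarrow> add r s \<in> R"
  and R_mul: "r \<in> R \<Longrightarrow> s \<in> R \<Longrightarrow> mul r s \<in> R"
  and R_ne: "R \<noteq> {}"
  using R_sub by (auto simp: subsemiring_def)

lemma exists_nontop: "\<exists>a::'a. a \<noteq> top"
  using R_ne c by blast

lemma W_in_R: "W \<in> R"
proof -
  obtain a :: 'a where a: "a \<noteq> top" using exists_nontop by blast
  have "E a a kc \<in> R" using a by (intro E_in_R) auto
  moreover have "E a a kc = W" using a by (simp add: boxmap_kconst fab_top)
  ultimately show ?thesis by simp
qed

lemma add_W: "r \<in> R \<Longrightarrow> add r W = W"
  by (rule extensionalityI[OF _ Wm_ext]) (auto simp: jm_add_def Wm_def sjoin_A R_fun)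

lemma mul_W1: "s \<in> R \<Longrightarrow> mul s W = W"
  by (rule extensionalityI[OF _ Wm_ext]) (auto simp: jm_mult_def compose_def Wm_def R_A)

lemma mul_W2: "s \<in> R \<Longrightarrow> mul W s = W"
  by (rule extensionalityI[OF _ Wm_ext]) (auto simp: jm_mult_def compose_def Wm_def R_fun)

lemma add_idem: "r \<in> R \<Longrightarrow> add r r = r"
  by (rule extensionalityI[OF _ R_ext]) (auto simp: jm_add_def LKj.sj_idem R_fun)

lemma add_le: "r \<in> R \<Longrightarrow> e \<in> R \<Longrightarrow> jm_le (LK n) (leLK n) e r \<Longrightarrow> add r e = r"
  by (rule extensionalityI[OF _ R_ext]) (auto simp: jm_add_def jm_le_def LKj.sj_absorb2 R_fun)


lemma E_A: "a \<noteq> top \<Longrightarrow> g \<in> S \<union> {kc} \<Longrightarrow> E a b g (Aset n) = Aset n"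
  by (simp add: boxmap_A fab_top Sb_Kmap)

lemma E_W: assumes a: "a \<noteq> top" and g: "g0 \<in> S" "g1 \<in> S" "g0 \<noteq> g1"
  shows "add (E a b g0) (E a b g1) = W"
proof (rule extensionalityI[OF _ Wm_ext])
  show "add (E a b g0) (E a b g1) \<in> extensional (LK n)" by (simp add: jm_add_def)
  fix c :: "('a \<times> nat option) set" assume c: "c \<in> LK n"
  show "add (E a b g0) (E a b g1) c = W c"
    using c
  proof (rule LK_casesE)
    assume "c = Aset n"
    thus ?thesis using a g c by (simp add: jm_add_def Wm_def E_A sjoin_A A_LK)
  next
    fix y :: 'a and l assume y: "y \<noteq> top" "l \<in> {1..n}" "c = {(y, Some l)}"
    obtain m0 where m0: "m0 \<in> {1..n}" "g0 (Some l) = Some m0" using S_Some g y by blast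
    obtain m1 where m1: "m1 \<in> {1..n}" "g1 (Some l) = Some m1" using S_Some g y by blast
    have "m0 \<noteq> m1" using S_distinct[OF g y(2)] m0 m1 by simp
    have v: "add (E a b g0) (E a b g1) c = sjoin (leLK n) (LK n) (cls n (fab a b y) (Some m0)) (cls n (fab a b y) (Some m1))"
      using c y m0 m1 by (simp add: jm_add_def boxmap_N)
    show ?thesis
    proof (cases "fab a b y = top")
      case True
      then show ?thesis using v c m0 m1 by (simp add: cls_eq Wm_def sjoin_A A_LK)
    next
      case False
      then show ?thesis using v c m0 m1 \<open>m0 \<noteq> m1\<close> by (simp add: cls_eq Wm_def sjoin_NN_diff)
    qed
  qed
qed

lemma comp_inv: assumes g0: "g0 \<in> S" and g': "g' \<in> S"
  shows "compose K (compose K g0 (restrict (inv_into K g') K)) g' = g0"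
proof (rule extensionalityI[OF _ S_ext[OF g0]])
  show "compose K (compose K g0 (restrict (inv_into K g') K)) g' \<in> extensional K"
    by (simp add: compose_def)
  fix x assume x: "x \<in> K"
  have gx: "g' x \<in> K" using S_Kmap[OF g'] x by (auto simp: Kmap_def)
  have "inj_on g' K" using S_bij[OF g'] by (simp add: bij_betw_def)
  thus "compose K (compose K g0 (restrict (inv_into K g') K)) g' x = g0 x"
    using x gx by (simp add: compose_eq)
qed

lemma comp_inv_ne: assumes g0: "g0 \<in> S" and g': "g' \<in> S" and g: "g \<in> S" "g \<noteq> g'"
  and i: "i \<in> {1..n}"
  shows "compose K (compose K g0 (restrict (inv_into K g') K)) g \<noteq> g0"
proof
  assume eq: "compose K (compose K g0 (restrict (inv_into K g') K)) g = g0"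
  have si: "Some i \<in> K" using i by simp
  have gi: "g (Some i) \<in> K" using S_Kmap[OF g(1)] si by (auto simp: Kmap_def)
  have bij: "bij_betw g' K K" by (rule S_bij[OF g'])
  hence im: "g (Some i) \<in> g' ` K" using gi by (simp add: bij_betw_def)
  hence iv: "inv_into K g' (g (Some i)) \<in> K" by (rule inv_into_into)
  have "g0 (inv_into K g' (g (Some i))) = g0 (Some i)"
    using fun_cong[OF eq, of "Some i"] si gi by (simp add: compose_eq)
  moreover have "inj_on g0 K" using S_bij[OF g0] by (simp add: bij_betw_def)
  ultimately have "inv_into K g' (g (Some i)) = Some i" using iv si by (simp add: inj_on_def)
  hence "g' (Some i) = g (Some i)" using f_inv_into_f[OF im] by simp
  thus False using S_distinct[OF g(1) g' g(2) i] by simp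
qed


lemma cong_sub: "semiring_congruence R add mul \<rho> \<Longrightarrow> (u,v) \<in> \<rho> \<Longrightarrow> u \<in> R \<and> v \<in> R"
  unfolding semiring_congruence_def equiv_def refl_on_def by blast

lemma cong_sym: "semiring_congruence R add mul \<rho> \<Longrightarrow> (u,v) \<in> \<rho> \<Longrightarrow> (v,u) \<in> \<rho>"
  unfolding semiring_congruence_def equiv_def by (meson symD)

lemma cong_trans: "semiring_congruence R add mul \<rho> \<Longrightarrow> (u,v) \<in> \<rho> \<Longrightarrow> (v,w) \<in> \<rho> \<Longrightarrow> (u,w) \<in> \<rho>"
  unfolding semiring_congruence_def equiv_def by (meson transD)

lemma cong_refl: "semiring_congruence R add mul \<rho> \<Longrightarrow> u \<in> R \<Longrightarrow> (u,u) \<in> \<rho>"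
  unfolding semiring_congruence_def equiv_def refl_on_def by blast

lemma cong_addL: "semiring_congruence R add mul \<rho> \<Longrightarrow> (u,v) \<in> \<rho> \<Longrightarrow> w \<in> R \<Longrightarrow> (add w u, add w v) \<in> \<rho>"
  unfolding semiring_congruence_def by blast

lemma cong_mulL: "semiring_congruence R add mul \<rho> \<Longrightarrow> (u,v) \<in> \<rho> \<Longrightarrow> w \<in> R \<Longrightarrow> (mul w u, mul w v) \<in> \<rho>"
  unfolding semiring_congruence_def by blast

lemma cong_mulR: "semiring_congruence R add mul \<rho> \<Longrightarrow> (u,v) \<in> \<rho> \<Longrightarrow> w \<in> R \<Longrightarrow> (mul u w, mul v w) \<in> \<rho>"
  unfolding semiring_congruence_def by blast

lemma JM1_top: "f \<in> JM1 (UNIV::'a set) (\<le>) top \<Longrightarrow> f top = top"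
  by (simp add: JM1_def)

lemma core:
  assumes cg: "semiring_congruence R add mul \<rho>" and pq: "(\<phi>, \<psi>) \<in> \<rho>"
    and x: "x \<noteq> top" "i \<in> {1..n}"
    and nle: "\<not> leLK n (\<phi> {(x, Some i)}) (\<psi> {(x, Some i)})"
    and a0: "a0 \<noteq> top" and g0: "g0 \<in> S"
  shows "(E a0 b0 g0, W) \<in> \<rho>"
proof -
  let ?p = "{(x, Some i)}"
  have pR: "\<phi> \<in> R" "\<psi> \<in> R" using cong_sub[OF cg pq] by auto
  have pLK: "?p \<in> LK n" using x by (simp add: single_LK)
  obtain f' g' where f': "f' \<in> JM1 (UNIV::'a set) (\<le>) top" and g': "g' \<in> S \<union> {kc}"
    and \<psi>: "\<psi> = boxmap n f' g'" using a[OF pR(2)] by blast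
  obtain f g where f: "f \<in> JM1 (UNIV::'a set) (\<le>) top" and g: "g \<in> S \<union> {kc}"
    and \<phi>: "\<phi> = boxmap n f g" using a[OF pR(1)] by blast
  have f't: "f' top = top" and ft: "f top = top" using f f' by (simp_all add: JM1_top)
  have "\<psi> ?p \<noteq> Aset n"
  proof
    assume "\<psi> ?p = Aset n"
    moreover have "leLK n (\<phi> ?p) (Aset n)" using R_fun[OF pR(1) pLK] by (rule leLK_A)
    ultimately show False using nle by simp
  qed
  hence \<psi>p: "cls n (f' x) (g' (Some i)) \<noteq> Aset n" using \<psi> x by (simp add: boxmap_N)
  have g'S: "g' \<in> S"
  proof (rule ccontr)
    assume "g' \<notin> S" hence "g' = kc" using g' by simp
    thus False using \<psi>p x by (simp add: kconst_def cls_eq)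
  qed
  obtain j where j: "j \<in> {1..n}" "g' (Some i) = Some j" using S_Some[OF g'S x(2)] by blast
  define cc where "cc = f' x"
  have cc: "cc \<noteq> top" using \<psi>p j cc_def by (auto simp: cls_eq)
  have \<psi>p2: "\<psi> ?p = {(cc, Some j)}" using \<psi> x j cc cc_def by (simp add: boxmap_N cls_eq)
  define k where "k = compose K g0 (restrict (inv_into K g') K)"
  have kS: "k \<in> S" unfolding k_def by (intro S_comp g0 S_inv g'S)
  define \<alpha> where "\<alpha> = E cc b0 k"
  define \<beta> where "\<beta> = E a0 x (\<lambda>x\<in>K. x)"
  have \<alpha>R: "\<alpha> \<in> R" unfolding \<alpha>_def using cc kS by (intro E_in_R) auto
  have \<beta>R: "\<beta> \<in> R" unfolding \<beta>_def using a0 S_id by (intro E_in_R) auto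
  have rel: "(mul (mul \<alpha> \<phi>) \<beta>, mul (mul \<alpha> \<psi>) \<beta>) \<in> \<rho>"
    using cong_mulR[OF cg cong_mulL[OF cg pq \<alpha>R] \<beta>R] .
  have idK: "Kmap n (\<lambda>x\<in>K. x)" by (rule S_Kmap[OF S_id])
  have fabt: "fab cc b0 top = top" using cc by (rule fab_top)
  have fabt2: "fab a0 x top = top" using a0 by (rule fab_top)
  have comp: "mul (mul \<alpha> (boxmap n h gg)) \<beta> =
      boxmap n ((fab cc b0 \<circ> h) \<circ> fab a0 x) (compose K (compose K k gg) (\<lambda>x\<in>K. x))"
    if h: "h top = top" and gg: "Kmap n gg" for h gg
  proof -
    have "mul \<alpha> (boxmap n h gg) = boxmap n (fab cc b0 \<circ> h) (compose K k gg)"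
      unfolding \<alpha>_def using fabt h S_Kmap[OF kS] gg by (rule boxmap_comp)
    moreover have "mul (boxmap n (fab cc b0 \<circ> h) (compose K k gg)) \<beta> = 
        boxmap n ((fab cc b0 \<circ> h) \<circ> fab a0 x) (compose K (compose K k gg) (\<lambda>x\<in>K. x))"
      unfolding \<beta>_def using h fabt fabt2 Kmap_compose[OF S_Kmap[OF kS] gg] idK
      by (intro boxmap_comp) auto
    ultimately show ?thesis by simp
  qed
  have fabeq: "(fab cc b0 \<circ> f') \<circ> fab a0 x = fab a0 b0"
  proof (rule ext)
    fix y show "((fab cc b0 \<circ> f') \<circ> fab a0 x) y = fab a0 b0 y"
    proof (cases "y \<le> a0")
      case True
      hence "fab a0 x y = x" "fab a0 b0 y = b0" by (simp_all add: fab_def)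
      moreover have "fab cc b0 (f' x) = b0" by (simp add: fab_def cc_def)
      ultimately show ?thesis by simp
    next
      case False
      hence "fab a0 x y = top" "fab a0 b0 y = top" by (simp_all add: fab_def)
      thus ?thesis using f't fabt by simp
    qed
  qed
  have keq: "compose K (compose K k g') (\<lambda>x\<in>K. x) = g0"
  proof -
    have "compose K k g' = g0" unfolding k_def by (rule comp_inv[OF g0 g'S])
    thus ?thesis using compose_id_right[OF S_ext[OF g0]] by simp
  qed
  have psirel: "mul (mul \<alpha> \<psi>) \<beta> = E a0 b0 g0"
    using comp[of f' g', OF f't S_Kmap[OF g'S]] \<psi> fabeq keq by simp
  have toW: "(E a0 b0 g0, W) \<in> \<rho>" if "mul (mul \<alpha> \<phi>) \<beta> = W"
    using cong_sym[OF cg] rel that psirel by simp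
  show ?thesis
  proof (cases "g = kc")
    case True
    hence "\<phi> = W" using \<phi> ft by (simp add: boxmap_kconst)
    thus ?thesis using \<alpha>R \<beta>R by (intro toW) (simp add: mul_W1 mul_W2 W_in_R R_mul)
  next
    case False
    hence gS: "g \<in> S" using g by simp
    have phicomp: "mul (mul \<alpha> \<phi>) \<beta> = boxmap n ((fab cc b0 \<circ> f) \<circ> fab a0 x) (compose K (compose K k g) (\<lambda>x\<in>K. x))"
      using comp[of f g, OF ft S_Kmap[OF gS]] \<phi> by simp
    show ?thesis
    proof (cases "f x \<le> cc")
      case False
      have "(fab cc b0 \<circ> f) \<circ> fab a0 x = (\<lambda>_. top)"
      proof (rule ext)
        fix y show "((fab cc b0 \<circ> f) \<circ> fab a0 x) y = top"
        proof (cases "y \<le> a0")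
          case True
          hence "fab a0 x y = x" by (simp_all add: fab_def)
          moreover have "fab cc b0 (f x) = top" using False by (simp add: fab_def)
          ultimately show ?thesis by simp
        next
          case False
          hence "fab a0 x y = top" by (simp_all add: fab_def)
          thus ?thesis using ft fabt by simp
        qed
      qed
      hence "mul (mul \<alpha> \<phi>) \<beta> = W" using phicomp Kmap_compose[OF Kmap_compose[OF S_Kmap[OF kS] S_Kmap[OF gS]] idK]
        by (simp add: boxmap_top)
      thus ?thesis by (rule toW)
    next
      case True
      have fxt: "f x \<noteq> top"
      proof
        assume "f x = top"
        hence "top \<le> cc" using True by simp
        hence "cc = top" by (simp add: top_unique)
        thus False using cc by simp
      qed
      have "(fab cc b0 \<circ> f) \<circ> fab a0 x = fab a0 b0"
      proof (rule ext)
        fix y show "((fab cc b0 \<circ> f) \<circ> fab a0 x) y = fab a0 b0 y"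
        proof (cases "y \<le> a0")
          case yT: True
          hence "fab a0 x y = x" "fab a0 b0 y = b0" by (simp_all add: fab_def)
          moreover have "fab cc b0 (f x) = b0" using True by (simp add: fab_def)
          ultimately show ?thesis by simp
        next
          case False
          hence "fab a0 x y = top" "fab a0 b0 y = top" by (simp_all add: fab_def)
          thus ?thesis using ft fabt by simp
        qed
      qed
      hence phi2: "mul (mul \<alpha> \<phi>) \<beta> = E a0 b0 (compose K k g)"
        using phicomp compose_id_right[of "compose K k g" K] by (simp add: compose_def)
      have gne: "g \<noteq> g'"
      proof
        assume "g = g'"
        hence "\<phi> ?p = {(f x, Some j)}" using \<phi> x j fxt by (simp add: boxmap_N cls_eq)
        thus False using nle \<psi>p2 True fxt cc j by (simp add: leLK_NN)
      qed
      define g1 where "g1 = compose K k g"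
      have g1S: "g1 \<in> S" unfolding g1_def using kS gS by (rule S_comp)
      have g1ne: "g1 \<noteq> g0" unfolding g1_def k_def using comp_inv_ne[OF g0 g'S gS gne x(2)] .
      have r1: "(E a0 b0 g1, E a0 b0 g0) \<in> \<rho>" using rel phi2 psirel g1_def by simp
      have E0R: "E a0 b0 g0 \<in> R" using a0 g0 by (intro E_in_R) auto
      have "(add (E a0 b0 g0) (E a0 b0 g1), add (E a0 b0 g0) (E a0 b0 g0)) \<in> \<rho>"
        by (rule cong_addL[OF cg r1 E0R])
      moreover have "add (E a0 b0 g0) (E a0 b0 g1) = W" using E_W[OF a0 g0 g1S] g1ne by simp
      moreover have "add (E a0 b0 g0) (E a0 b0 g0) = E a0 b0 g0" using E0R by (rule add_idem)
      ultimately show ?thesis using cong_sym[OF cg] by simp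
    qed
  qed
qed


lemma all_W:
  assumes cg: "semiring_congruence R add mul \<rho>" and ne: "\<rho> \<noteq> Id_on R" and chi: "\<chi> \<in> R"
  shows "(\<chi>, W) \<in> \<rho>"
proof -
  obtain \<phi> \<psi> where pq: "(\<phi>, \<psi>) \<in> \<rho>" "\<phi> \<noteq> \<psi>"
  proof -
    { assume "\<forall>u v. (u,v) \<in> \<rho> \<longrightarrow> u = v"
      hence "\<rho> \<subseteq> Id_on R"
      proof -
        assume h: "\<forall>u v. (u,v) \<in> \<rho> \<longrightarrow> u = v"
        show ?thesis
        proof clarify
          fix u v assume uv: "(u,v) \<in> \<rho>"
          hence "u = v" "u \<in> R" using h cong_sub[OF cg uv] by auto
          thus "(u,v) \<in> Id_on R" by (simp add: Id_on_def)
        qed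
      qed
      moreover have "Id_on R \<subseteq> \<rho>" using cong_refl[OF cg] by auto
      ultimately have False using ne by blast }
    thus ?thesis using that by blast
  qed
  have pR: "\<phi> \<in> R" "\<psi> \<in> R" using cong_sub[OF cg pq(1)] by auto
  obtain p where p: "p \<in> LK n" "\<phi> p \<noteq> \<psi> p"
    using pq(2) extensionalityI[OF R_ext[OF pR(1)] R_ext[OF pR(2)]] by blast
  have "p \<noteq> Aset n" using p R_A pR by auto
  then obtain x :: 'a and i where x: "x \<noteq> top" "i \<in> {1..n}" "p = {(x, Some i)}"
    using LK_cases[OF p(1)] by blast
  have H: "(E a0 b0 g0, W) \<in> \<rho>" if a0: "a0 \<noteq> top" and g0: "g0 \<in> S" for a0 b0 g0
  proof (cases "leLK n (\<phi> p) (\<psi> p)")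
    case False
    thus ?thesis using core[OF cg pq(1) x(1,2) _ a0 g0] x by simp
  next
    case True
    have "\<not> leLK n (\<psi> p) (\<phi> p)"
      using True p LKj.asym R_fun pR by metis
    thus ?thesis using core[OF cg cong_sym[OF cg pq(1)] x(1,2) _ a0 g0] x by simp
  qed
  obtain a0 b0 g0 where abg: "a0 \<noteq> top" "g0 \<in> S \<union> {kc}" "jm_le (LK n) (leLK n) (E a0 b0 g0) \<chi>"
    using c[OF chi] by blast
  have ER: "E a0 b0 g0 \<in> R" using abg by (intro E_in_R)
  have EW: "(E a0 b0 g0, W) \<in> \<rho>"
  proof (cases "g0 = kc")
    case True
    hence "E a0 b0 g0 = W" using abg by (simp add: boxmap_kconst fab_top)
    thus ?thesis using cong_refl[OF cg W_in_R] by simp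
  next
    case False thus ?thesis using abg H by simp
  qed
  have "(add \<chi> (E a0 b0 g0), add \<chi> W) \<in> \<rho>" by (rule cong_addL[OF cg EW chi])
  moreover have "add \<chi> (E a0 b0 g0) = \<chi>" using chi ER abg(3) by (rule add_le)
  moreover have "add \<chi> W = W" using chi by (rule add_W)
  ultimately show ?thesis by simp
qed

lemma simple: "simple_semiring R add mul"
  unfolding simple_semiring_def
proof (intro allI impI)
  fix \<rho> assume cg: "semiring_congruence R add mul \<rho>"
  show "\<rho> = Id_on R \<or> \<rho> = R \<times> R"
  proof (cases "\<rho> = Id_on R")
    case False
    have "R \<times> R \<subseteq> \<rho>"
    proof clarify
      fix u v assume "u \<in> R" "v \<in> R"
      thus "(u, v) \<in> \<rho>" using all_W[OF cg False] cong_sym[OF cg] cong_trans[OF cg] by blast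
    qed
    moreover have "\<rho> \<subseteq> R \<times> R" using cong_sub[OF cg] by auto
    ultimately show ?thesis by blast
  qed simp
qed

lemma semiring: "is_semiring R add mul"
  unfolding is_semiring_def
proof (intro conjI ballI)
  show "R \<noteq> {}" by (rule R_ne)
next
  fix r s assume "r \<in> R" "s \<in> R"
  thus "add r s \<in> R" "mul r s \<in> R" by (simp_all add: R_add R_mul)
next
  fix r s t assume r: "r \<in> R" and s: "s \<in> R" and t: "t \<in> R"
  show "add (add r s) t = add r (add s t)"
    by (rule extensionalityI[of _ "LK n"]) (auto simp: jm_add_def LKj.sj_assoc R_fun r s t)
  show "add r s = add s r"
    by (rule extensionalityI[of _ "LK n"]) (auto simp: jm_add_def LKj.sj_comm R_fun r s)
  have tf: "t \<in> LK n \<rightarrow> LK n" using R_fun t by blast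
  show "mul (mul r s) t = mul r (mul s t)"
    unfolding jm_mult_def using compose_assoc[OF tf, of r s] by simp
  show "mul r (add s t) = add (mul r s) (mul r t)"
    by (rule extensionalityI[of _ "LK n"]) (auto simp: jm_add_def jm_mult_def compose_eq R_fun R_hom r s t)
  show "mul (add r s) t = add (mul r t) (mul s t)"
    by (rule extensionalityI[of _ "LK n"]) (auto simp: jm_add_def jm_mult_def compose_eq R_fun r s t)
qed

lemma finR: "finite R"
proof -
  have "R \<subseteq> (LK n \<rightarrow>\<^sub>E LK n)" using R_ext R_fun by (auto simp: PiE_def)
  moreover have "finite ((LK n :: ('a \<times> nat option) set set) \<rightarrow>\<^sub>E (LK n :: ('a \<times> nat option) set set))"
    by (rule finite_PiE) (rule LK_finite)+
  ultimately show ?thesis by (rule finite_subset)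
qed

lemma absorbing: "has_absorbing_greatest R add mul"
  unfolding has_absorbing_greatest_def
  using W_in_R add_W mul_W1 mul_W2 by blast

lemma idem: "add_idempotent R add"
  unfolding add_idempotent_def using add_idem by blast

end


theorem proposition8p4:
  fixes n :: nat
    and S :: "(nat option \<Rightarrow> nat option) set"
    and R :: "(('a::{finite, semilattice_sup, order_top} \<times> nat option) set
                \<Rightarrow> ('a \<times> nat option) set) set"
  assumes S_sub: "subgroup_AutK n S"
    and S_join: "\<And>f g. f \<in> S \<Longrightarrow> g \<in> S \<Longrightarrow> f \<noteq> g \<Longrightarrow>
                   jm_add (Kset n) leK f g = kconst (Kset n) None"
    and R_sub: "subsemiring R (JM1 (LK n) (leLK n) (Aset n)) (jm_add (LK n) (leLK n)) (jm_mult (LK n))"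
    and a: "\<And>\<phi>. \<phi> \<in> R \<Longrightarrow> \<exists>f \<in> JM1 (UNIV :: 'a set) (\<le>) top.
              \<exists>g \<in> S \<union> {kconst (Kset n) None}. \<phi> = boxmap n f g"
    and b: "\<And>a b g. a \<noteq> top \<Longrightarrow> g \<in> S \<union> {kconst (Kset n) None} \<Longrightarrow> boxmap n (fab a b) g \<in> R"
    and c: "\<And>\<phi>. \<phi> \<in> R \<Longrightarrow> \<exists>a b g. a \<noteq> top \<and> g \<in> S \<union> {kconst (Kset n) None} \<and>
              jm_le (LK n) (leLK n) (boxmap n (fab a b) g) \<phi>"
  shows "finite R \<and> is_semiring R (jm_add (LK n) (leLK n)) (jm_mult (LK n)) \<and>
         simple_semiring R (jm_add (LK n) (leLK n)) (jm_mult (LK n)) \<and>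
         add_idempotent R (jm_add (LK n) (leLK n)) \<and>
         has_absorbing_greatest R (jm_add (LK n) (leLK n)) (jm_mult (LK n))"
proof -
  interpret P84 n S R
    by (unfold_locales; fact assms)
  show ?thesis using finR semiring simple idem absorbing by blast
qed

end
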